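(* Let $G=(V,E)$ be a directed graph with $m=|E|$ edges and let $\mathcal{S}_0$ be any initial state. For every $0<\beta<1$, the convergence time $T$ of the \textsc{Random Pick} process on $G$ from $\mathcal{S}_0$ satisfies $\Pr[T\ge m/\beta]\le\beta$.
   Context: A state is a map $V\to\{b,r,u\}$ (blue, red, uncolored); colored means blue or red. \textsc{Random Pick} process: in each round $t=1,2,\dots$, every node $v$ with at least one out-neighbor picks an out-neighbor $ps_t(v)$ uniformly at random, independently; $\mathcal{S}_t(v)=\mathcal{S}_{t-1}(ps_t(v))$ if $\mathcal{S}_{t-1}(v)=u$ and $\mathcal{S}_{t-1}(ps_t(v))\ne u$, else $\mathcal{S}_t(v)=\mathcal{S}_{t-1}(v)$. A state is stable if no uncolored node has a colored out-neighbor; the convergence time is the smallest $t\ge0$ with $\mathcal{S}_t$ stable. *)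

theory Defs
  imports "HOL-Probability.Probability"
begin

datatype color = Blue | Red | Uncolored

type_synonym 'v state = "'v \<Rightarrow> color"

definition colored :: "color \<Rightarrow> bool" where
  "colored c \<longleftrightarrow> c \<noteq> Uncolored"

definition out_nbrs :: "('v \<times> 'v) set \<Rightarrow> 'v \<Rightarrow> 'v set" where
  "out_nbrs E v = {w. (v, w) \<in> E}"

definition stable :: "'v set \<Rightarrow> ('v \<times> 'v) set \<Rightarrow> 'v state \<Rightarrow> bool" where
  "stable V E S \<longleftrightarrow>
     (\<forall>v\<in>V. S v = Uncolored \<longrightarrow> (\<forall>w \<in> out_nbrs E v. \<not> colored (S w)))"

definition picks :: "'v set \<Rightarrow> ('v \<times> 'v) set \<Rightarrow> ('v \<Rightarrow> 'v option) pmf" where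
  "picks V E = Pi_pmf {v \<in> V. out_nbrs E v \<noteq> {}} None
                  (\<lambda>v. map_pmf Some (pmf_of_set (out_nbrs E v)))"

definition update :: "'v state \<Rightarrow> ('v \<Rightarrow> 'v option) \<Rightarrow> 'v state" where
  "update S p = (\<lambda>v. case p v of
       None \<Rightarrow> S v
     | Some w \<Rightarrow> (if S v = Uncolored \<and> colored (S w) then S w else S v))"

definition rp_step :: "'v set \<Rightarrow> ('v \<times> 'v) set \<Rightarrow> 'v state \<Rightarrow> 'v state pmf" where
  "rp_step V E S = map_pmf (update S) (picks V E)"

fun rp_traj :: "'v set \<Rightarrow> ('v \<times> 'v) set \<Rightarrow> 'v state \<Rightarrow> nat \<Rightarrow> 'v state list pmf" where
  "rp_traj V E S0 0 = return_pmf [S0]"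
| "rp_traj V E S0 (Suc n) =
     bind_pmf (rp_traj V E S0 n) (\<lambda>xs. map_pmf (\<lambda>s. xs @ [s]) (rp_step V E (last xs)))"

text \<open>Probability that the convergence time T (least t with S_t stable) is at
  least x. The event T \<ge> x means: S_t is not stable for every t < x; it only
  depends on the states S_0, ..., S_N with N = nat \<lceil>x\<rceil>.\<close>
definition prob_conv_time_ge ::
  "'v set \<Rightarrow> ('v \<times> 'v) set \<Rightarrow> 'v state \<Rightarrow> real \<Rightarrow> real" where
  "prob_conv_time_ge V E S0 x =
     measure_pmf.prob (rp_traj V E S0 (nat \<lceil>x\<rceil>))
       {xs. \<forall>t < length xs. real t < x \<longrightarrow> \<not> stable V E (xs ! t)}"

end

theory Submission
  imports Defs
begin

definition Phi :: "'v set \<Rightarrow> ('v \<times> 'v) set \<Rightarrow> 'v state \<Rightarrow> nat" where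
  "Phi V E S = (\<Sum>v\<in>V. if S v = Uncolored then card (out_nbrs E v) else 0)"

lemma Phi_le:
  assumes "finite V" "E \<subseteq> V \<times> V"
  shows "Phi V E S \<le> card E"
proof -
  have fin: "finite (out_nbrs E v)" for v
    using assms by (auto intro: finite_subset[of _ V] simp: out_nbrs_def)
  have "E = Sigma V (out_nbrs E)" using assms(2) by (auto simp: out_nbrs_def)
  hence "card E = card (Sigma V (out_nbrs E))" by simp
  also have "\<dots> = (\<Sum>v\<in>V. card (out_nbrs E v))" using assms(1) fin by (intro card_SigmaI) auto
  finally have "card E = (\<Sum>v\<in>V. card (out_nbrs E v))" .
  moreover have "Phi V E S \<le> (\<Sum>v\<in>V. card (out_nbrs E v))"
    unfolding Phi_def by (rule sum_mono) auto
  ultimately show ?thesis by simp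
qed

lemma update_keep: "S v \<noteq> Uncolored \<Longrightarrow> update S p v = S v"
  by (auto simp: update_def split: option.splits)

lemma Phi_update:
  assumes "finite V" "v0 \<in> V" "S v0 = Uncolored" "colored (S w0)"
  shows "Phi V E (update S p) + (if p v0 = Some w0 then card (out_nbrs E v0) else 0) \<le> Phi V E S"
proof -
  let ?f = "\<lambda>S v. if S v = Uncolored then card (out_nbrs E v) else 0"
  have mono: "?f (update S p) v \<le> ?f S v" for v
    by (cases "S v = Uncolored") (auto simp: update_keep)
  have "Phi V E (update S p) = ?f (update S p) v0 + (\<Sum>v\<in>V-{v0}. ?f (update S p) v)"
    unfolding Phi_def using assms by (simp add: sum.remove)
  moreover have "Phi V E S = ?f S v0 + (\<Sum>v\<in>V-{v0}. ?f S v)"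
    unfolding Phi_def using assms by (simp add: sum.remove)
  moreover have "(\<Sum>v\<in>V-{v0}. ?f (update S p) v) \<le> (\<Sum>v\<in>V-{v0}. ?f S v)"
    by (rule sum_mono) (rule mono)
  moreover have "?f (update S p) v0 + (if p v0 = Some w0 then card (out_nbrs E v0) else 0) \<le> ?f S v0"
  proof (cases "p v0 = Some w0")
    case True
    hence "update S p v0 = S w0" using assms by (simp add: update_def)
    thus ?thesis using assms True by (simp add: colored_def)
  next
    case False thus ?thesis using mono[of v0] by simp
  qed
  ultimately show ?thesis by linarith
qed

lemma step_bound:
  assumes "finite V" "E \<subseteq> V \<times> V" "\<not> stable V E S"
  shows "(\<integral>\<^sup>+ s. of_nat (Phi V E s) \<partial>measure_pmf (rp_step V E S)) + 1 \<le> of_nat (Phi V E S)"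
proof -
  obtain v0 w0 where v0: "v0 \<in> V" "S v0 = Uncolored" "w0 \<in> out_nbrs E v0" "colored (S w0)"
    using assms(3) unfolding stable_def by blast
  let ?N = "out_nbrs E v0"
  let ?d = "card ?N"
  have finN: "finite ?N"
    using assms by (auto intro: finite_subset[of _ V] simp: out_nbrs_def)
  have dpos: "?d > 0" using finN v0 card_gt_0_iff by blast
  have D: "finite {v \<in> V. out_nbrs E v \<noteq> {}}" using assms by simp
  have "emeasure (measure_pmf (picks V E)) {p. p v0 = Some w0}
        = emeasure (measure_pmf (map_pmf (\<lambda>f. f v0) (picks V E))) {Some w0}"
    by (simp add: emeasure_map_pmf vimage_def)
  also have "map_pmf (\<lambda>f. f v0) (picks V E) = map_pmf Some (pmf_of_set ?N)"
    unfolding picks_def using v0 by (subst Pi_pmf_component[OF D]) auto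
  also have "emeasure (measure_pmf (map_pmf Some (pmf_of_set ?N))) {Some w0}
        = emeasure (measure_pmf (pmf_of_set ?N)) {w0}"
    by (simp add: emeasure_map_pmf vimage_def)
  also have "\<dots> = ennreal (1 / real ?d)"
    using finN v0 by (subst emeasure_pmf_single) (subst pmf_of_set, auto)
  finally have pr: "emeasure (measure_pmf (picks V E)) {p. p v0 = Some w0} = ennreal (1 / real ?d)" .
  have "(\<integral>\<^sup>+ s. of_nat (Phi V E s) \<partial>measure_pmf (rp_step V E S)) + 1
      = (\<integral>\<^sup>+ p. of_nat (Phi V E (update S p)) \<partial>measure_pmf (picks V E))
        + of_nat ?d * emeasure (measure_pmf (picks V E)) {p. p v0 = Some w0}"
    using dpos by (simp add: rp_step_def nn_integral_map_pmf pr ennreal_of_nat_eq_real_of_nat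
        flip: ennreal_mult)
  also have "\<dots> = (\<integral>\<^sup>+ p. of_nat (Phi V E (update S p)) + of_nat ?d * indicator {p. p v0 = Some w0} p \<partial>measure_pmf (picks V E))"
    by (simp add: nn_integral_add nn_integral_cmult)
  also have "\<dots> \<le> (\<integral>\<^sup>+ p. of_nat (Phi V E S) \<partial>measure_pmf (picks V E))"
  proof (rule nn_integral_mono)
    fix p
    have "Phi V E (update S p) + (if p v0 = Some w0 then ?d else 0) \<le> Phi V E S"
      using Phi_update[OF assms(1) v0(1,2,4)] .
    hence "(of_nat (Phi V E (update S p) + (if p v0 = Some w0 then ?d else 0)) :: ennreal) \<le> of_nat (Phi V E S)"
      by (simp only: of_nat_le_iff)
    thus "of_nat (Phi V E (update S p)) + of_nat ?d * indicator {p. p v0 = Some w0} p \<le> (of_nat (Phi V E S) :: ennreal)"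
      by (auto split: if_splits simp: indicator_def)
  qed
  also have "\<dots> = of_nat (Phi V E S)" by simp
  finally show ?thesis .
qed

definition Iok :: "'v set \<Rightarrow> ('v \<times> 'v) set \<Rightarrow> 'v state list \<Rightarrow> bool" where
  "Iok V E xs = (\<forall>t < length xs - 1. \<not> stable V E (xs ! t))"

definition gfun :: "'v set \<Rightarrow> ('v \<times> 'v) set \<Rightarrow> nat \<Rightarrow> 'v state list \<Rightarrow> ennreal" where
  "gfun V E n xs = (if Iok V E xs then of_nat (Phi V E (last xs) + n) else 0)"

lemma traj_len: "xs \<in> set_pmf (rp_traj V E S0 n) \<Longrightarrow> length xs = Suc n"
  by (induction n arbitrary: xs) (auto simp: rp_step_def)

lemma Iok_snoc:
  assumes "xs \<noteq> []"
  shows "Iok V E (xs @ [s]) \<longleftrightarrow> Iok V E xs \<and> \<not> stable V E (last xs)"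
proof -
  have "Iok V E (xs @ [s]) \<longleftrightarrow> (\<forall>t < length xs. \<not> stable V E (xs ! t))"
    unfolding Iok_def by (auto simp: nth_append)
  also have "\<dots> \<longleftrightarrow> Iok V E xs \<and> \<not> stable V E (last xs)"
    using assms unfolding Iok_def
    by (metis One_nat_def Suc_pred' diff_less last_conv_nth length_greater_0_conv less_Suc_eq zero_less_one)
  finally show ?thesis .
qed

lemma gfun_bound:
  assumes "finite V" "E \<subseteq> V \<times> V"
  shows "(\<integral>\<^sup>+ xs. gfun V E n xs \<partial>measure_pmf (rp_traj V E S0 n)) \<le> of_nat (Phi V E S0)"
proof (induction n)
  case 0
  show ?case by (simp add: gfun_def Iok_def)
next
  case (Suc n)
  have "(\<integral>\<^sup>+ xs. gfun V E (Suc n) xs \<partial>measure_pmf (rp_traj V E S0 (Suc n)))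
     = (\<integral>\<^sup>+ xs. (\<integral>\<^sup>+ s. gfun V E (Suc n) (xs @ [s]) \<partial>measure_pmf (rp_step V E (last xs))) \<partial>measure_pmf (rp_traj V E S0 n))"
    by (simp add: nn_integral_map_pmf)
  also have "\<dots> \<le> (\<integral>\<^sup>+ xs. gfun V E n xs \<partial>measure_pmf (rp_traj V E S0 n))"
  proof (rule nn_integral_mono_AE, rule AE_pmfI)
    fix xs assume "xs \<in> set_pmf (rp_traj V E S0 n)"
    hence ne: "xs \<noteq> []" using traj_len by fastforce
    show "(\<integral>\<^sup>+ s. gfun V E (Suc n) (xs @ [s]) \<partial>measure_pmf (rp_step V E (last xs))) \<le> gfun V E n xs"
    proof (cases "Iok V E xs \<and> \<not> stable V E (last xs)")
      case True
      have "(\<integral>\<^sup>+ s. gfun V E (Suc n) (xs @ [s]) \<partial>measure_pmf (rp_step V E (last xs)))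
          = (\<integral>\<^sup>+ s. of_nat (Phi V E s) + of_nat (Suc n) \<partial>measure_pmf (rp_step V E (last xs)))"
        using True ne by (intro nn_integral_cong) (simp add: gfun_def Iok_snoc)
      also have "\<dots> = (\<integral>\<^sup>+ s. of_nat (Phi V E s) \<partial>measure_pmf (rp_step V E (last xs))) + 1 + of_nat n"
        by (simp add: nn_integral_add add.assoc)
      also have "\<dots> \<le> of_nat (Phi V E (last xs)) + of_nat n"
        using step_bound[OF assms, of "last xs"] True by (intro add_right_mono) auto
      also have "\<dots> = gfun V E n xs" using True by (simp add: gfun_def)
      finally show ?thesis .
    next
      case False
      hence "gfun V E (Suc n) (xs @ [s]) = 0" for s using ne by (simp add: gfun_def Iok_snoc)
      thus ?thesis by simp
    qed
  qed
  also have "\<dots> \<le> of_nat (Phi V E S0)" by (rule Suc.IH)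
  finally show ?case .
qed

theorem theorem3p3:
  fixes V :: "'v set" and E :: "('v \<times> 'v) set" and S0 :: "'v state" and \<beta> :: real
  assumes "finite V" and "E \<subseteq> V \<times> V" and "E \<noteq> {}"
    and "0 < \<beta>" and "\<beta> < 1"
  shows "prob_conv_time_ge V E S0 (real (card E) / \<beta>) \<le> \<beta>"
proof -
  define m where "m = card E"
  define x where "x = real m / \<beta>"
  define N where "N = nat \<lceil>x\<rceil>"
  define Ev where "Ev = {xs. \<forall>t < length xs. real t < x \<longrightarrow> \<not> stable V E (xs ! t)}"
  define M where "M = measure_pmf (rp_traj V E S0 N)"
  have finE: "finite E" using assms(1,2) finite_subset by blast
  hence mpos: "m > 0" using assms(3) by (simp add: m_def card_gt_0_iff)
  have xpos: "x > 0" using mpos assms(4) by (simp add: x_def)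
  have xN: "x \<le> real N" unfolding N_def by linarith
  have key: "real t < x" if "t < N" for t
  proof -
    have "int t < \<lceil>x\<rceil>" using that xpos by (simp add: N_def)
    thus ?thesis by (metis ceiling_less_cancel ceiling_of_int less_ceiling_iff of_int_of_nat_eq)
  qed
  have "ennreal (real N) * emeasure M Ev = (\<integral>\<^sup>+ xs. ennreal (real N) * indicator Ev xs \<partial>M)"
    by (simp add: nn_integral_cmult_indicator M_def)
  also have "\<dots> \<le> (\<integral>\<^sup>+ xs. gfun V E N xs \<partial>M)"
  proof (rule nn_integral_mono_AE, unfold M_def, rule AE_pmfI)
    fix xs assume "xs \<in> set_pmf (rp_traj V E S0 N)"
    hence len: "length xs = Suc N" by (rule traj_len)
    show "ennreal (real N) * indicator Ev xs \<le> gfun V E N xs"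
    proof (cases "xs \<in> Ev")
      case True
      hence "Iok V E xs" using len key unfolding Iok_def Ev_def by auto
      thus ?thesis using True by (simp add: gfun_def ennreal_of_nat_eq_real_of_nat)
    qed simp
  qed
  also have "\<dots> \<le> of_nat (Phi V E S0)" unfolding M_def by (rule gfun_bound[OF assms(1,2)])
  also have "\<dots> \<le> of_nat m" unfolding m_def using Phi_le[OF assms(1,2)] by simp
  finally have "ennreal (real N * measure M Ev) \<le> ennreal (real m)"
    by (simp add: M_def measure_pmf.emeasure_eq_measure ennreal_mult ennreal_of_nat_eq_real_of_nat)
  hence le: "real N * measure M Ev \<le> real m" by (simp add: ennreal_le_iff)
  have p0: "measure M Ev \<ge> 0" by simp
  have "measure M Ev * x \<le> measure M Ev * real N" using p0 xN by (simp add: mult_left_mono)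
  also have "\<dots> \<le> real m" using le by (simp add: mult.commute)
  also have "\<dots> = \<beta> * x" using assms(4) by (simp add: x_def)
  finally have "measure M Ev \<le> \<beta>" using xpos by simp
  thus ?thesis unfolding prob_conv_time_ge_def M_def Ev_def N_def x_def m_def .
qed

end
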